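(* Assume $0<h<1$, $2/h\notin\mathbb Z$ and $\lim_{\beta\to\infty}|\Lambda_{L_\beta}|e^{-2\beta}=0$. Then there exists a finite constant $C_0$ such that $$\frac{\mu_\beta(\mathscr V_{\mathbf{-1}}\setminus\{\mathbf{-1}\})}{\mu_\beta(\mathbf{-1})}\le C_0\,|\Lambda_L|\,e^{-2\beta}\quad\text{for all }\beta\ge C_0.$$ In particular this ratio tends to $0$ as $\beta\to\infty$.
   Context: Blume–Capel model. Fix $h\in(0,2)$, $n_0=\lfloor 2/h\rfloor$. For each $\beta>0$, $L=L_\beta$ is a positive integer (with $L_\beta\ge n_0(n_0+1)+2$), $\Lambda_L$ the two-dimensional discrete torus of side $L$, $\Omega_L=\{-1,0,1\}^{\Lambda_L}$. Hamiltonian $\mathbb H(\sigma)=\sum(\sigma(y)-\sigma(x))^2-h\sum_x\sigma(x)$, first sum over unordered nearest-neighbour pairs. $\mu_\beta(\sigma)=Z_\beta^{-1}e^{-\beta\mathbb H(\sigma)}$. $\sigma^{x,\pm}$: replace $\sigma(x)$ by $\sigma(x)\pm1$ modulo $3$ in $\{-1,0,1\}$. $\mathbf{-1}$ is the all-$(-1)$ configuration. $N(\sigma)=\#\{x:\sigma(x)\ne-1\}$. $\mathfrak R$ is the set of configurations equal to $0$ on a rectangle of sites with side lengths $n_0$ and $n_0+1$ (either orientation) and $-1$ elsewhere. The valley of $\mathbf{-1}$ is $\mathscr V_{\mathbf{-1}}=\{\sigma:N(\sigma)\le n_0(n_0+1)\}\cup\{\sigma^{x,\pm}:\sigma\in\mathfrak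 R,x\in\Lambda_L\}$. *)

theory Defs
  imports "HOL-Analysis.Analysis"
begin

type_synonym site = "nat \<times> nat"
type_synonym config = "site \<Rightarrow> int"

definition torus :: "nat \<Rightarrow> site set" where
  "torus L = {0..<L} \<times> {0..<L}"

definition nbrs :: "nat \<Rightarrow> site \<Rightarrow> site set" where
  "nbrs L x = {((fst x + 1) mod L, snd x), ((fst x + L - 1) mod L, snd x),
               (fst x, (snd x + 1) mod L), (fst x, (snd x + L - 1) mod L)} - {x}"

definition Omega :: "nat \<Rightarrow> config set" where
  "Omega L = {\<sigma>. (\<forall>x\<in>torus L. \<sigma> x \<in> {-1,0,1}) \<and> (\<forall>x. x \<notin> torus L \<longrightarrow> \<sigma> x = 0)}"

(* sum over unordered nearest-neighbour pairs = half the sum over ordered ones *)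
definition Ham :: "real \<Rightarrow> nat \<Rightarrow> config \<Rightarrow> real" where
  "Ham h L \<sigma> = (1/2) * (\<Sum>x\<in>torus L. \<Sum>y\<in>nbrs L x. real_of_int ((\<sigma> y - \<sigma> x)^2))
                 - h * (\<Sum>x\<in>torus L. real_of_int (\<sigma> x))"

definition Zpart :: "real \<Rightarrow> real \<Rightarrow> nat \<Rightarrow> real" where
  "Zpart h \<beta> L = (\<Sum>\<sigma>\<in>Omega L. exp (-\<beta> * Ham h L \<sigma>))"

definition mu :: "real \<Rightarrow> real \<Rightarrow> nat \<Rightarrow> config set \<Rightarrow> real" where
  "mu h \<beta> L A = (\<Sum>\<sigma>\<in>A \<inter> Omega L. exp (-\<beta> * Ham h L \<sigma>)) / Zpart h \<beta> L"

definition minus_one :: "nat \<Rightarrow> config" where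
  "minus_one L = (\<lambda>x. if x \<in> torus L then -1 else 0)"

definition spin_shift :: "int \<Rightarrow> int \<Rightarrow> int" where
  "spin_shift s v = ((v + 1 + s) mod 3) - 1"

definition flip :: "config \<Rightarrow> site \<Rightarrow> int \<Rightarrow> config" where
  "flip \<sigma> x s = \<sigma>(x := spin_shift s (\<sigma> x))"

definition Ncount :: "nat \<Rightarrow> config \<Rightarrow> nat" where
  "Ncount L \<sigma> = card {x\<in>torus L. \<sigma> x \<noteq> -1}"

definition n0 :: "real \<Rightarrow> nat" where
  "n0 h = nat \<lfloor>2 / h\<rfloor>"

definition rect :: "nat \<Rightarrow> nat \<Rightarrow> nat \<Rightarrow> nat \<Rightarrow> nat \<Rightarrow> site set" where
  "rect L a b w v = {((a + i) mod L, (b + j) mod L) | i j. i < w \<and> j < v}"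

definition Rset :: "real \<Rightarrow> nat \<Rightarrow> config set" where
  "Rset h L = {\<sigma>\<in>Omega L. \<exists>a<L. \<exists>b<L. \<exists>w v.
      ((w = n0 h \<and> v = n0 h + 1) \<or> (w = n0 h + 1 \<and> v = n0 h)) \<and>
      (\<forall>x\<in>torus L. \<sigma> x = (if x \<in> rect L a b w v then 0 else -1))}"

definition valley :: "real \<Rightarrow> nat \<Rightarrow> config set" where
  "valley h L = {\<sigma>\<in>Omega L. Ncount L \<sigma> \<le> n0 h * (n0 h + 1)}
     \<union> {flip \<sigma> x s | \<sigma> x s. \<sigma> \<in> Rset h L \<and> x \<in> torus L \<and> s \<in> {1, -1}}"

end

theory Submission
  imports Defs "HOL-Library.FuncSet"
begin

lemma mod_succ: "(a::nat) < L \<Longrightarrow> Suc a mod L = (if Suc a = L then 0 else Suc a)"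
  by (cases "Suc a = L") simp_all
lemma mod_pred0: "0 < (L::nat) \<Longrightarrow> (0+L-Suc 0) mod L = L - 1"
  by simp
lemma mod_pred1: "(a::nat) < L \<Longrightarrow> 0 < a \<Longrightarrow> (a+L-Suc 0) mod L = a - 1"
proof -
  assume a: "a < L" "0 < a"
  have e: "a + L - Suc 0 = (a - 1) + L" using a by linarith
  have "((a - 1) + L) mod L = (a - 1) mod L" by (rule mod_add_self2)
  also have "\<dots> = a - 1" using a by (intro mod_less) linarith
  finally show ?thesis using e by presburger
qed
lemma mod_pred: "(a::nat) < L \<Longrightarrow> (a+L-Suc 0) mod L = (if a = 0 then L-1 else a-1)"
  using mod_pred0[of L] mod_pred1[of a L] by (cases "a = 0") auto

definition rt :: "nat \<Rightarrow> site \<Rightarrow> site" where "rt L x = ((fst x + 1) mod L, snd x)"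
definition lf :: "nat \<Rightarrow> site \<Rightarrow> site" where "lf L x = ((fst x + L - 1) mod L, snd x)"
definition up :: "nat \<Rightarrow> site \<Rightarrow> site" where "up L x = (fst x, (snd x + 1) mod L)"
definition dn :: "nat \<Rightarrow> site \<Rightarrow> site" where "dn L x = (fst x, (snd x + L - 1) mod L)"

lemma nbrs_ne: assumes "3 \<le> L" "x \<in> torus L"
  shows "rt L x \<noteq> x" "lf L x \<noteq> x" "up L x \<noteq> x" "dn L x \<noteq> x"
    "rt L x \<noteq> lf L x" "rt L x \<noteq> up L x" "rt L x \<noteq> dn L x" "lf L x \<noteq> up L x"
     "lf L x \<noteq> dn L x" "up L x \<noteq> dn L x"
proof -
  obtain a b where x: "x = (a,b)" "a < L" "b < L" using assms(2) unfolding torus_def by auto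
  have gen: "Suc c mod L \<noteq> c \<and> (c + L - Suc 0) mod L \<noteq> c \<and> Suc c mod L \<noteq> (c + L - Suc 0) mod L"
    if c: "c < L" for c
    unfolding mod_succ[OF c] mod_pred[OF c] using c assms(1) by auto
  have A: "Suc a mod L \<noteq> a" "(a + L - Suc 0) mod L \<noteq> a" "Suc a mod L \<noteq> (a + L - Suc 0) mod L"
    using gen[OF x(2)] by auto
  have B: "Suc b mod L \<noteq> b" "(b + L - Suc 0) mod L \<noteq> b" "Suc b mod L \<noteq> (b + L - Suc 0) mod L"
    using gen[OF x(3)] by auto
  show "rt L x \<noteq> x" "lf L x \<noteq> x" "up L x \<noteq> x" "dn L x \<noteq> x"
    "rt L x \<noteq> lf L x" "rt L x \<noteq> up L x" "rt L x \<noteq> dn L x" "lf L x \<noteq> up L x"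
     "lf L x \<noteq> dn L x" "up L x \<noteq> dn L x"
    using A B unfolding x rt_def lf_def up_def dn_def by auto
qed

lemma nbrs_eq: assumes "3 \<le> L" "x \<in> torus L"
  shows "nbrs L x = {rt L x, lf L x, up L x, dn L x}"
  using nbrs_ne[OF assms] unfolding nbrs_def rt_def[symmetric] lf_def[symmetric] up_def[symmetric] dn_def[symmetric]
  by auto

lemma nbrs_sum: assumes "3 \<le> L" "x \<in> torus L"
  shows "(\<Sum>y\<in>nbrs L x. f y) = f (rt L x) + f (lf L x) + f (up L x) + f (dn L x)"
  using nbrs_ne[OF assms] by (simp add: nbrs_eq[OF assms] add.assoc)

lemma rt_torus: "0 < L \<Longrightarrow> x \<in> torus L \<Longrightarrow> rt L x \<in> torus L"
  and lf_torus: "0 < L \<Longrightarrow> x \<in> torus L \<Longrightarrow> lf L x \<in> torus L"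
  and up_torus: "0 < L \<Longrightarrow> x \<in> torus L \<Longrightarrow> up L x \<in> torus L"
  and dn_torus: "0 < L \<Longrightarrow> x \<in> torus L \<Longrightarrow> dn L x \<in> torus L"
  unfolding rt_def lf_def up_def dn_def torus_def by auto

lemma lf_rt: "x \<in> torus L \<Longrightarrow> lf L (rt L x) = x"
  and rt_lf: "x \<in> torus L \<Longrightarrow> rt L (lf L x) = x"
  and dn_up: "x \<in> torus L \<Longrightarrow> dn L (up L x) = x"
  and up_dn: "x \<in> torus L \<Longrightarrow> up L (dn L x) = x"
  unfolding rt_def lf_def up_def dn_def torus_def
  by (auto simp: mod_succ mod_pred)

lemma bij_rt: "0 < L \<Longrightarrow> bij_betw (rt L) (torus L) (torus L)"
  by (rule bij_betw_byWitness[where f'="lf L"]) (auto simp: lf_rt rt_lf rt_torus lf_torus)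
lemma bij_up: "0 < L \<Longrightarrow> bij_betw (up L) (torus L) (torus L)"
  by (rule bij_betw_byWitness[where f'="dn L"]) (auto simp: dn_up up_dn up_torus dn_torus)

lemma nbrs_torus: "0 < L \<Longrightarrow> y \<in> nbrs L x \<Longrightarrow> x \<in> torus L \<Longrightarrow> y \<in> torus L"
  unfolding nbrs_def torus_def by auto

definition Eng :: "nat \<Rightarrow> config \<Rightarrow> real" where
  "Eng L \<sigma> = (1/2) * (\<Sum>x\<in>torus L. \<Sum>y\<in>nbrs L x. real_of_int ((\<sigma> y - \<sigma> x)^2))"

lemma Eng_eq: assumes "3 \<le> L"
  shows "Eng L \<sigma> = (\<Sum>x\<in>torus L. real_of_int ((\<sigma> (rt L x) - \<sigma> x)^2))
     + (\<Sum>x\<in>torus L. real_of_int ((\<sigma> (up L x) - \<sigma> x)^2))"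
proof -
  let ?e = "\<lambda>x y. real_of_int ((\<sigma> y - \<sigma> x)^2)"
  have L0: "0 < L" using assms by simp
  have 1: "(\<Sum>x\<in>torus L. \<Sum>y\<in>nbrs L x. ?e x y) = (\<Sum>x\<in>torus L. ?e x (rt L x)) + (\<Sum>x\<in>torus L. ?e x (lf L x))
     + (\<Sum>x\<in>torus L. ?e x (up L x)) + (\<Sum>x\<in>torus L. ?e x (dn L x))"
    by (simp add: nbrs_sum[OF assms] sum.distrib)
  have 2: "(\<Sum>x\<in>torus L. ?e x (lf L x)) = (\<Sum>x\<in>torus L. ?e x (rt L x))"
  proof -
    have "(\<Sum>x\<in>torus L. ?e x (lf L x)) = (\<Sum>x\<in>torus L. ?e (rt L x) (lf L (rt L x)))"
      using sum.reindex_bij_betw[OF bij_rt[OF L0], of "\<lambda>x. ?e x (lf L x)"] by simp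
    also have "\<dots> = (\<Sum>x\<in>torus L. ?e x (rt L x))"
      by (rule sum.cong) (auto simp: lf_rt power2_commute)
    finally show ?thesis .
  qed
  have 3: "(\<Sum>x\<in>torus L. ?e x (dn L x)) = (\<Sum>x\<in>torus L. ?e x (up L x))"
  proof -
    have "(\<Sum>x\<in>torus L. ?e x (dn L x)) = (\<Sum>x\<in>torus L. ?e (up L x) (dn L (up L x)))"
      using sum.reindex_bij_betw[OF bij_up[OF L0], of "\<lambda>x. ?e x (dn L x)"] by simp
    also have "\<dots> = (\<Sum>x\<in>torus L. ?e x (up L x))"
      by (rule sum.cong) (auto simp: dn_up power2_commute)
    finally show ?thesis .
  qed
  show ?thesis unfolding Eng_def 1 2 3 by (simp add: algebra_simps)
qed

lemma cycle_tv_le: fixes g :: "nat \<Rightarrow> int" assumes ij: "i \<le> j" "j < L"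
  shows "2*\<bar>g j - g i\<bar> \<le> (\<Sum>a<L. \<bar>g (Suc a mod L) - g a\<bar>)"
proof -
  define G where "G a = g (a mod L)" for a
  have L0: "0 < L" using ij by simp
  have eq: "(\<Sum>a<L. \<bar>g (Suc a mod L) - g a\<bar>) = (\<Sum>a\<in>{0..<L}. \<bar>G (Suc a) - G a\<bar>)"
    by (rule sum.cong) (auto simp: G_def)
  have split: "(\<Sum>a\<in>{0..<L}. \<bar>G (Suc a) - G a\<bar>) = (\<Sum>a\<in>{0..<i}. \<bar>G (Suc a) - G a\<bar>)
      + (\<Sum>a\<in>{i..<j}. \<bar>G (Suc a) - G a\<bar>) + (\<Sum>a\<in>{j..<L}. \<bar>G (Suc a) - G a\<bar>)"
    using ij by (simp add: sum.atLeastLessThan_concat)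
  have t: "\<bar>G n - G m\<bar> \<le> (\<Sum>a\<in>{m..<n}. \<bar>G (Suc a) - G a\<bar>)" if "m \<le> n" for m n
  proof -
    have "\<bar>G n - G m\<bar> = \<bar>\<Sum>a\<in>{m..<n}. G (Suc a) - G a\<bar>" using sum_Suc_diff'[OF that, of G] by simp
    also have "\<dots> \<le> (\<Sum>a\<in>{m..<n}. \<bar>G (Suc a) - G a\<bar>)" by (rule sum_abs)
    finally show ?thesis .
  qed
  have "\<bar>G i - G 0\<bar> + \<bar>G j - G i\<bar> + \<bar>G L - G j\<bar> \<le> (\<Sum>a<L. \<bar>g (Suc a mod L) - g a\<bar>)"
    unfolding eq split using t[of 0 i] t[of i j] t[of j L] ij by linarith
  moreover have "G 0 = g 0" "G L = g 0" "G i = g i" "G j = g j" using ij by (auto simp: G_def)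
  moreover have "2*\<bar>g j - g i\<bar> \<le> \<bar>g i - g 0\<bar> + \<bar>g j - g i\<bar> + \<bar>g 0 - g j\<bar>" by arith
  ultimately show ?thesis by simp
qed

lemma cycle_tv: fixes g :: "nat \<Rightarrow> int" assumes ij: "i < L" "j < L"
  shows "2*\<bar>g j - g i\<bar> \<le> (\<Sum>a<L. \<bar>g (Suc a mod L) - g a\<bar>)"
proof (cases "i \<le> j")
  case True then show ?thesis using cycle_tv_le[OF True ij(2)] by simp
next
  case False then show ?thesis using cycle_tv_le[of j i L g] ij by (simp add: abs_minus_commute)
qed

lemma abs_le_sq: "\<bar>d::int\<bar> \<le> d^2"
proof (cases "d = 0")
  case False
  then have "1 \<le> \<bar>d\<bar>" by linarith
  then have "\<bar>d\<bar> * 1 \<le> \<bar>d\<bar> * \<bar>d\<bar>" by (intro mult_left_mono) auto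
  then show ?thesis by (simp add: power2_eq_square abs_mult[symmetric])
qed simp

lemma row_bound: fixes g :: "nat \<Rightarrow> int" assumes vals: "\<forall>a<L. g a \<in> {-1,0,1}" and i: "i<L" "g i = -1"
  shows "2*(if \<exists>a<L. g a \<noteq> -1 then 1 else 0) + 2*(if \<exists>a<L. g a = 1 then 1 else 0)
     \<le> (\<Sum>a<L. (g (Suc a mod L) - g a)^2)"
proof -
  have tv: "(\<Sum>a<L. \<bar>g (Suc a mod L) - g a\<bar>) \<le> (\<Sum>a<L. (g (Suc a mod L) - g a)^2)"
    by (rule sum_mono) (rule abs_le_sq)
  have nn: "0 \<le> (\<Sum>a<L. (g (Suc a mod L) - g a)^2)" by (rule sum_nonneg) simp
  show ?thesis
  proof (cases "\<exists>a<L. g a = 1")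
    case True
    then obtain j where j: "j < L" "g j = 1" by auto
    show ?thesis using cycle_tv[OF i(1) j(1), of g] tv True j i by auto
  next
    case F: False
    show ?thesis
    proof (cases "\<exists>a<L. g a \<noteq> -1")
      case True
      then obtain j where j: "j < L" "g j \<noteq> -1" by auto
      with F vals have "g j = 0" by auto
      then show ?thesis using cycle_tv[OF i(1) j(1), of g] tv True F j i by auto
    next
      case False then show ?thesis using F nn by auto
    qed
  qed
qed

definition Sset :: "nat \<Rightarrow> config \<Rightarrow> site set" where "Sset L \<sigma> = {x\<in>torus L. \<sigma> x \<noteq> -1}"
definition Pset :: "nat \<Rightarrow> config \<Rightarrow> site set" where "Pset L \<sigma> = {x\<in>torus L. \<sigma> x = 1}"

lemma finite_torus[simp]: "finite (torus L)" by (simp add: torus_def)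
lemma card_torus: "card (torus L) = L * L" by (simp add: torus_def card_cartesian_product)

lemma sum_torus: "(\<Sum>x\<in>torus L. f x) = (\<Sum>b<L. \<Sum>a<L. f (a,b))"
proof -
  have "(\<Sum>x\<in>torus L. f x) = (\<Sum>a<L. \<Sum>b<L. f (a,b))"
    unfolding torus_def by (simp add: sum.cartesian_product lessThan_atLeast0)
  also have "\<dots> = (\<Sum>b<L. \<Sum>a<L. f (a,b))" by (rule sum.swap)
  finally show ?thesis .
qed

lemma sum_torus': "(\<Sum>x\<in>torus L. f x) = (\<Sum>a<L. \<Sum>b<L. f (a,b))"
  unfolding torus_def by (simp add: sum.cartesian_product lessThan_atLeast0)

lemma sum_ind_card: "(\<Sum>b<(L::nat). (if P b then 1 else 0::int)) = int (card {b\<in>{..<L}. P b})"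
proof -
  have "(\<Sum>b<L. (if P b then 1 else 0::int)) = (\<Sum>b\<in>{b\<in>{..<L}. P b}. 1)"
    using sum.inter_filter[of "{..<L}" "\<lambda>_. 1::int" P] by simp
  then show ?thesis by simp
qed

lemma Omega_vals: "\<sigma> \<in> Omega L \<Longrightarrow> x \<in> torus L \<Longrightarrow> \<sigma> x \<in> {-1,0,1}"
  and Omega_off: "\<sigma> \<in> Omega L \<Longrightarrow> x \<notin> torus L \<Longrightarrow> \<sigma> x = 0"
  unfolding Omega_def by (auto, metis prod.collapse)

definition EngI :: "nat \<Rightarrow> config \<Rightarrow> int" where
  "EngI L \<sigma> = (\<Sum>x\<in>torus L. (\<sigma> (rt L x) - \<sigma> x)^2) + (\<Sum>x\<in>torus L. (\<sigma> (up L x) - \<sigma> x)^2)"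

lemma Eng_EngI: "3 \<le> L \<Longrightarrow> Eng L \<sigma> = real_of_int (EngI L \<sigma>)"
  unfolding Eng_eq EngI_def by simp

lemma row_part:
  assumes om: "\<sigma> \<in> Omega L" and cS: "card (Sset L \<sigma>) < L"
  shows "2 * int (card (snd ` Sset L \<sigma>)) + 2 * int (card (snd ` Pset L \<sigma>))
     \<le> (\<Sum>x\<in>torus L. (\<sigma> (rt L x) - \<sigma> x)^2)"
proof -
  have row: "2*(if \<exists>a<L. \<sigma> (a,b) \<noteq> -1 then 1 else 0) + 2*(if \<exists>a<L. \<sigma> (a,b) = 1 then 1 else 0)
     \<le> (\<Sum>a<L. (\<sigma> (Suc a mod L, b) - \<sigma> (a,b))^2)" if b: "b < L" for b
  proof -
    have "\<exists>i<L. \<sigma> (i,b) = -1"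
    proof (rule ccontr)
      assume "\<not> ?thesis"
      then have "(\<lambda>a. (a,b)) ` {..<L} \<subseteq> Sset L \<sigma>" using b unfolding Sset_def torus_def by auto
      then have "card ((\<lambda>a. (a,b)) ` {..<L}) \<le> card (Sset L \<sigma>)"
        by (intro card_mono) (auto simp: Sset_def)
      moreover have "card ((\<lambda>a. (a,b)) ` {..<L}) = L" by (subst card_image) (auto simp: inj_on_def)
      ultimately show False using cS by simp
    qed
    then obtain i where "i < L" "\<sigma> (i,b) = -1" by auto
    moreover have "\<forall>a<L. \<sigma> (a,b) \<in> {-1,0,1}" using Omega_vals[OF om] b by (auto simp: torus_def)
    ultimately show ?thesis using row_bound[of L "\<lambda>a. \<sigma> (a,b)" i] by simp
  qed
  have "(\<Sum>x\<in>torus L. (\<sigma> (rt L x) - \<sigma> x)^2) = (\<Sum>b<L. \<Sum>a<L. (\<sigma> (Suc a mod L, b) - \<sigma> (a,b))^2)"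
    by (simp add: sum_torus rt_def)
  also have "\<dots> \<ge> (\<Sum>b<L. 2*(if \<exists>a<L. \<sigma> (a,b) \<noteq> -1 then 1 else 0) + 2*(if \<exists>a<L. \<sigma> (a,b) = 1 then 1 else 0))"
    by (rule sum_mono) (use row in auto)
  moreover have "(\<Sum>b<L. 2*(if \<exists>a<L. \<sigma> (a,b) \<noteq> -1 then 1 else 0) + 2*(if \<exists>a<L. \<sigma> (a,b) = 1 then 1 else (0::int)))
     = 2 * int (card {b\<in>{..<L}. \<exists>a<L. \<sigma> (a,b) \<noteq> -1}) + 2 * int (card {b\<in>{..<L}. \<exists>a<L. \<sigma> (a,b) = 1})"
    by (simp add: sum.distrib sum_distrib_left[symmetric] sum_ind_card)
  moreover have "{b\<in>{..<L}. \<exists>a<L. \<sigma> (a,b) \<noteq> -1} = snd ` Sset L \<sigma>"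
    unfolding Sset_def torus_def by force
  moreover have "{b\<in>{..<L}. \<exists>a<L. \<sigma> (a,b) = 1} = snd ` Pset L \<sigma>"
    unfolding Pset_def torus_def by force
  ultimately show ?thesis by simp
qed

lemma col_part:
  assumes om: "\<sigma> \<in> Omega L" and cS: "card (Sset L \<sigma>) < L"
  shows "2 * int (card (fst ` Sset L \<sigma>)) + 2 * int (card (fst ` Pset L \<sigma>))
     \<le> (\<Sum>x\<in>torus L. (\<sigma> (up L x) - \<sigma> x)^2)"
proof -
  have row: "2*(if \<exists>b<L. \<sigma> (a,b) \<noteq> -1 then 1 else 0) + 2*(if \<exists>b<L. \<sigma> (a,b) = 1 then 1 else 0)
     \<le> (\<Sum>b<L. (\<sigma> (a, Suc b mod L) - \<sigma> (a,b))^2)" if a: "a < L" for a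
  proof -
    have "\<exists>i<L. \<sigma> (a,i) = -1"
    proof (rule ccontr)
      assume "\<not> ?thesis"
      then have "(\<lambda>b. (a,b)) ` {..<L} \<subseteq> Sset L \<sigma>" using a unfolding Sset_def torus_def by auto
      then have "card ((\<lambda>b. (a,b)) ` {..<L}) \<le> card (Sset L \<sigma>)"
        by (intro card_mono) (auto simp: Sset_def)
      moreover have "card ((\<lambda>b. (a,b)) ` {..<L}) = L" by (subst card_image) (auto simp: inj_on_def)
      ultimately show False using cS by simp
    qed
    then obtain i where "i < L" "\<sigma> (a,i) = -1" by auto
    moreover have "\<forall>b<L. \<sigma> (a,b) \<in> {-1,0,1}" using Omega_vals[OF om] a by (auto simp: torus_def)
    ultimately show ?thesis using row_bound[of L "\<lambda>b. \<sigma> (a,b)" i] by simp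
  qed
  have "(\<Sum>x\<in>torus L. (\<sigma> (up L x) - \<sigma> x)^2) = (\<Sum>a<L. \<Sum>b<L. (\<sigma> (a, Suc b mod L) - \<sigma> (a,b))^2)"
    by (simp add: sum_torus' up_def)
  also have "\<dots> \<ge> (\<Sum>a<L. 2*(if \<exists>b<L. \<sigma> (a,b) \<noteq> -1 then 1 else 0) + 2*(if \<exists>b<L. \<sigma> (a,b) = 1 then 1 else 0))"
    by (rule sum_mono) (use row in auto)
  moreover have "(\<Sum>a<L. 2*(if \<exists>b<L. \<sigma> (a,b) \<noteq> -1 then 1 else 0) + 2*(if \<exists>b<L. \<sigma> (a,b) = 1 then 1 else (0::int)))
     = 2 * int (card {a\<in>{..<L}. \<exists>b<L. \<sigma> (a,b) \<noteq> -1}) + 2 * int (card {a\<in>{..<L}. \<exists>b<L. \<sigma> (a,b) = 1})"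
    by (simp add: sum.distrib sum_distrib_left[symmetric] sum_ind_card)
  moreover have "{a\<in>{..<L}. \<exists>b<L. \<sigma> (a,b) \<noteq> -1} = fst ` Sset L \<sigma>"
    unfolding Sset_def torus_def by force
  moreover have "{a\<in>{..<L}. \<exists>b<L. \<sigma> (a,b) = 1} = fst ` Pset L \<sigma>"
    unfolding Pset_def torus_def by force
  ultimately show ?thesis by simp
qed

lemma card_le_proj: "finite X \<Longrightarrow> card X \<le> card (fst ` X) * card (snd ` X)"
proof -
  assume f: "finite X"
  have "X \<subseteq> fst ` X \<times> snd ` X" by force
  then have "card X \<le> card (fst ` X \<times> snd ` X)" by (intro card_mono) (auto simp: f)
  then show ?thesis by (simp add: card_cartesian_product)
qed

definition DH :: "real \<Rightarrow> nat \<Rightarrow> config \<Rightarrow> real" where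
  "DH h L \<sigma> = Eng L \<sigma> - h * (\<Sum>x\<in>torus L. real_of_int (\<sigma> x + 1))"

lemma minus_one_Omega: "minus_one L \<in> Omega L"
  unfolding minus_one_def Omega_def by auto

lemma Ham_DH: assumes "0 < L"
  shows "Ham h L \<sigma> = DH h L \<sigma> + h * real (card (torus L))"
proof -
  have "(\<Sum>x\<in>torus L. real_of_int (\<sigma> x + 1)) = (\<Sum>x\<in>torus L. real_of_int (\<sigma> x)) + real (card (torus L))"
    by (simp add: sum.distrib)
  then show ?thesis unfolding Ham_def DH_def Eng_def by (simp add: algebra_simps)
qed

lemma DH_minus_one: assumes "0 < L" shows "DH h L (minus_one L) = 0"
proof -
  have "Eng L (minus_one L) = 0" unfolding Eng_def
    by (auto intro!: sum.neutral simp: minus_one_def nbrs_torus[OF assms])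
  moreover have "(\<Sum>x\<in>torus L. real_of_int (minus_one L x + 1)) = 0"
    by (auto intro!: sum.neutral simp: minus_one_def)
  ultimately show ?thesis unfolding DH_def by simp
qed

lemma field_sum: assumes om: "\<sigma> \<in> Omega L"
  shows "(\<Sum>x\<in>torus L. real_of_int (\<sigma> x + 1)) = real (card (Sset L \<sigma>)) + real (card (Pset L \<sigma>))"
proof -
  have "(\<Sum>x\<in>torus L. real_of_int (\<sigma> x + 1)) = (\<Sum>x\<in>torus L. (if \<sigma> x \<noteq> -1 then 1 else 0) + (if \<sigma> x = 1 then 1 else 0))"
    by (rule sum.cong) (use Omega_vals[OF om] in auto)
  also have "\<dots> = (\<Sum>x\<in>Sset L \<sigma>. 1) + (\<Sum>x\<in>Pset L \<sigma>. 1)"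
    unfolding sum.distrib Sset_def Pset_def
    using sum.inter_filter[of "torus L" "\<lambda>_. 1::real" "\<lambda>x. \<sigma> x \<noteq> -1"]
       sum.inter_filter[of "torus L" "\<lambda>_. 1::real" "\<lambda>x. \<sigma> x = 1"] by simp
  finally show ?thesis by simp
qed

lemma finite_Sset[simp]: "finite (Sset L \<sigma>)" and finite_Pset[simp]: "finite (Pset L \<sigma>)"
  unfolding Sset_def Pset_def by auto

lemma Pset_sub: "Pset L \<sigma> \<subseteq> Sset L \<sigma>" unfolding Sset_def Pset_def by auto

lemma energy_bound:
  assumes L3: "3 \<le> L" and om: "\<sigma> \<in> Omega L" and cS: "card (Sset L \<sigma>) < L"
  shows "DH h L \<sigma> \<ge> 2 * (real (card (fst ` Sset L \<sigma>)) + real (card (snd ` Sset L \<sigma>)))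
     + 2 * (real (card (fst ` Pset L \<sigma>)) + real (card (snd ` Pset L \<sigma>)))
     - h * (real (card (Sset L \<sigma>)) + real (card (Pset L \<sigma>)))"
proof -
  have "2 * (int (card (fst ` Sset L \<sigma>)) + int (card (snd ` Sset L \<sigma>)))
     + 2 * (int (card (fst ` Pset L \<sigma>)) + int (card (snd ` Pset L \<sigma>))) \<le> EngI L \<sigma>" (is "?a \<le> _")
    using add_mono[OF row_part[OF om cS] col_part[OF om cS]] unfolding EngI_def by (simp add: algebra_simps)
  note I = this
  have "2 * (real (card (fst ` Sset L \<sigma>)) + real (card (snd ` Sset L \<sigma>)))
     + 2 * (real (card (fst ` Pset L \<sigma>)) + real (card (snd ` Pset L \<sigma>))) \<le> Eng L \<sigma>"
    unfolding Eng_EngI[OF L3] using I by (metis (mono_tags, lifting) of_int_add of_int_le_iff of_int_mult of_int_numeral of_int_of_nat_eq)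
  then show ?thesis unfolding DH_def field_sum[OF om] by linarith
qed

lemma arith1:
  fixes h r c k :: real and n :: nat
  assumes h: "0 < h" "h \<le> 2" "h * n \<le> 2" and k: "1 \<le> k" "k \<le> r * c" "k \<le> n * (n+1)"
    and rc: "0 \<le> r" "0 \<le> c" and rci: "r \<in> \<nat>" "c \<in> \<nat>"
  shows "h * k + 2 \<le> 2 * (r + c)"
proof -
  have r1: "1 \<le> r"
  proof (rule ccontr)
    assume "\<not> 1 \<le> r" then have "r = 0" using rci(1) rc(1) by (metis Nats_cases less_one not_less of_nat_0 of_nat_less_1_iff)
    then show False using k by simp
  qed
  have c1: "1 \<le> c"
  proof (rule ccontr)
    assume "\<not> 1 \<le> c" then have "c = 0" using rci(2) rc(2) by (metis Nats_cases less_one not_less of_nat_0 of_nat_less_1_iff)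
    then show False using k by simp
  qed
  have hk: "h * k \<le> h * (r * c)" "h * k \<le> h * (n * (n+1))" using k h by (auto intro: mult_left_mono)
  consider "r \<le> n" | "c \<le> n" | "n + 1 \<le> r \<and> n + 1 \<le> c"
  proof -
    have "r \<le> n \<or> n + 1 \<le> r" using rci(1) by (metis Nats_cases not_less of_nat_1 of_nat_add of_nat_le_iff Suc_eq_plus1 less_eq_Suc_le)
    moreover have "c \<le> n \<or> n + 1 \<le> c" using rci(2) by (metis Nats_cases not_less of_nat_1 of_nat_add of_nat_le_iff Suc_eq_plus1 less_eq_Suc_le)
    ultimately show ?thesis using that by blast
  qed
  then show ?thesis
  proof cases
    case 1
    have "h * r \<le> 2" using 1 h by (metis dual_order.trans mult_left_mono less_imp_le)
    then have "0 \<le> (2 - h * r) * (c - 1)" using c1 by simp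
    moreover have "0 \<le> r * (2 - h)" using r1 h by simp
    ultimately show ?thesis using hk by (simp add: algebra_simps)
  next
    case 2
    have "h * c \<le> 2" using 2 h by (metis dual_order.trans mult_left_mono less_imp_le)
    then have "0 \<le> (2 - h * c) * (r - 1)" using r1 by simp
    moreover have "0 \<le> c * (2 - h)" using c1 h by simp
    ultimately show ?thesis using hk by (simp add: algebra_simps)
  next
    case 3
    have "h * (n * (n+1)) = (h * n) * (real n + 1)" by (simp add: algebra_simps)
    also have "\<dots> \<le> 2 * (real n+1)" using h by (intro mult_right_mono) auto
    finally have A: "h * (n * (n+1)) \<le> 2 * (real n+1)" .
    have e: "real (n+1) = real n + 1" by simp
    have "0 \<le> real n" by simp
    then show ?thesis using hk 3 A unfolding e by auto
  qed
qed

lemma amgm_nat: fixes r c k m :: nat assumes "m*m < 4*k" "k \<le> r*c" shows "m < r + c"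
proof (rule ccontr)
  assume "\<not> m < r + c"
  then have "(r+c)*(r+c) \<le> m*m" by (intro mult_mono) auto
  moreover have "4*(r*c) \<le> (r+c)*(r+c)"
  proof -
    have "0 \<le> (int r - int c)^2" by simp
    then have "4*(int r*int c) \<le> (int r+int c)*(int r+int c)" by (simp add: power2_eq_square algebra_simps)
    then show ?thesis by (metis of_nat_add of_nat_le_iff of_nat_mult of_nat_numeral)
  qed
  ultimately show False using assms by linarith
qed

lemma hK: assumes "0 \<le> h" "h * n \<le> 2" shows "h * real (n*(n+1)) \<le> 2*(real n + 1)"
proof -
  have "h * real (n*(n+1)) = (h * n) * (real n + 1)" by (simp add: algebra_simps)
  also have "\<dots> \<le> 2 * (real n+1)" using assms by (intro mult_right_mono) auto
  finally show ?thesis .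
qed

lemma energy_ge2:
  fixes n :: nat and h :: real
  assumes L3: "3 \<le> L" and om: "\<sigma> \<in> Omega L" and k1: "1 \<le> card (Sset L \<sigma>)"
    and kK: "card (Sset L \<sigma>) \<le> n*(n+1)" and kL: "card (Sset L \<sigma>) < L"
    and h: "0 < h" "h \<le> 2" "h * n \<le> 2"
  shows "2 \<le> DH h L \<sigma>"
proof -
  let ?k = "card (Sset L \<sigma>)" and ?p = "card (Pset L \<sigma>)"
  let ?r = "card (fst ` Sset L \<sigma>)" and ?c = "card (snd ` Sset L \<sigma>)"
  let ?rp = "card (fst ` Pset L \<sigma>)" and ?cp = "card (snd ` Pset L \<sigma>)"
  have kr: "?k \<le> ?r * ?c" by (rule card_le_proj) simp
  have pr: "?p \<le> ?rp * ?cp" by (rule card_le_proj) simp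
  have pk: "?p \<le> ?k" by (rule card_mono) (auto simp: Pset_sub)
  have A: "h * ?k + 2 \<le> 2 * (real ?r + real ?c)"
    by (rule arith1[OF h, where r="real ?r" and c="real ?c" and k="real ?k"]) (use k1 kr kK in \<open>auto simp: of_nat_mult[symmetric] simp del: of_nat_mult\<close>)
  have B: "h * ?p \<le> 2 * (real ?rp + real ?cp)"
  proof (cases "?p = 0")
    case True then show ?thesis by simp
  next
    case False
    then have p1: "1 \<le> ?p" by linarith
    have "h * ?p + 2 \<le> 2 * (real ?rp + real ?cp)"
      by (rule arith1[OF h, where r="real ?rp" and c="real ?cp" and k="real ?p"]) (use p1 pr pk kK in \<open>auto simp: of_nat_mult[symmetric] simp del: of_nat_mult\<close>)
    then show ?thesis by simp
  qed
  show ?thesis using energy_bound[OF L3 om kL, of h] A B by (simp add: algebra_simps)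
qed

lemma arithF:
  fixes h :: real and n r c k p rp cp :: nat
  assumes h: "0 \<le> h" "h \<le> 1" "h * n \<le> 2" and n2: "2 \<le> n" and kr: "k \<le> r * c"
    and cases: "(k = n*(n+1)+1 \<and> p \<le> 1) \<or> (k = n*(n+1) \<and> p = 1 \<and> 1 \<le> rp \<and> 1 \<le> cp)
                \<or> (k = n*(n+1) - 1 \<and> p = 0)"
  shows "4 \<le> 2 * (real r + real c) + 2 * (real rp + real cp) - h * (real k + real p)"
proof -
  have hk: "h * real (n*(n+1)) \<le> 2*real n + 2" using hK h by simp
  have n2r: "2 \<le> real n" using n2 by simp
  have nn: "0 \<le> real rp + real cp" by simp
  from cases consider (a) "k = n*(n+1)+1" "p \<le> 1" | (b) "k = n*(n+1)" "p = 1" "1 \<le> rp" "1 \<le> cp"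
     | (c) "k = n*(n+1) - 1" "p = 0" by blast
  then show ?thesis
  proof cases
    case a
    have "(2*n+1)*(2*n+1) < 4*k" unfolding a(1) by (simp add: algebra_simps)
    from amgm_nat[OF this kr] have "2*n+2 \<le> r + c" by simp
    then have rc: "2*real n+2 \<le> real r + real c" by linarith
    have p1: "h * real p \<le> h" using a(2) h(1) mult_left_mono[of "real p" 1 h] by simp
    have "real k = real (n*(n+1)) + 1" unfolding a(1) by simp
    then have "h * (real k + real p) = h * real (n*(n+1)) + h + h * real p" by (simp add: algebra_simps)
    moreover obtain A where A: "A = h * real (n*(n+1))" by blast
    moreover obtain B where B: "B = h * (real k + real p)" by blast
    moreover obtain C where C: "C = h * real p" by blast
    ultimately have "B = A + h + C" "A \<le> 2 * real n + 2" "C \<le> h" using hk p1 by simp_all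
    then have X: "h * (real k + real p) \<le> 2 * real n + 2 + 2*h" unfolding B[symmetric] by linarith
    show ?thesis
    proof -
      have "2 * real n + 2 + 2*h \<le> 2 * (real r + real c) + 2 * (real rp + real cp) - 4" using rc h n2r nn by (smt (verit))
      then show ?thesis using X by linarith
    qed
  next
    case b
    have "(2*n)*(2*n) < 4*k" unfolding b(1) using n2 by (simp add: algebra_simps)
    from amgm_nat[OF this kr] have "2*n+1 \<le> r + c" by simp
    then have rc: "2*real n+1 \<le> real r + real c" by linarith
    have "h * (real k + real p) = h * real (n*(n+1)) + h" unfolding b(1) b(2) by (simp add: algebra_simps)
    moreover have "2 \<le> real rp + real cp" using b by linarith
    ultimately show ?thesis using rc hk h n2r nn by (smt (verit))
  next
    case c
    have e: "4*k + 4 = 4*n*n + 4*n"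
    proof -
      have "n*(n+1) \<ge> 1" using n2 by simp
      then have "k + 1 = n*(n+1)" using c(1) by linarith
      then show ?thesis by (simp add: algebra_simps)
    qed
    have "4*n < 4*n*n" using n2 by simp
    moreover have "(2*n)*(2*n) = 4*n*n" by simp
    ultimately have "(2*n)*(2*n) < 4*k" using e n2 by linarith
    from amgm_nat[OF this kr] have "2*n+1 \<le> r + c" by simp
    then have rc: "2*real n+1 \<le> real r + real c" by linarith
    have "k \<le> n*(n+1)" using c(1) by simp
    then have "real k \<le> real (n*(n+1))" by (simp only: of_nat_le_iff)
    then have "h * (real k + real p) \<le> h * real (n*(n+1))" using c(2) h by (simp add: mult_left_mono)
    then show ?thesis using rc hk h n2r nn by (smt (verit))
  qed
qed

definition rcfg :: "nat \<Rightarrow> nat \<Rightarrow> nat \<Rightarrow> nat \<Rightarrow> nat \<Rightarrow> config" where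
  "rcfg L a b w v = (\<lambda>y. if y \<in> torus L then (if y \<in> rect L a b w v then 0 else -1) else 0)"

lemma Rset_rcfg: assumes "\<sigma> \<in> Rset h L"
  shows "\<exists>a<L. \<exists>b<L. \<exists>w v. ((w = n0 h \<and> v = n0 h + 1) \<or> (w = n0 h + 1 \<and> v = n0 h)) \<and> \<sigma> = rcfg L a b w v"
proof -
  from assms obtain a b w v where ab: "a < L" "b < L" "(w = n0 h \<and> v = n0 h + 1) \<or> (w = n0 h + 1 \<and> v = n0 h)"
    and om: "\<sigma> \<in> Omega L" and eq: "\<forall>x\<in>torus L. \<sigma> x = (if x \<in> rect L a b w v then 0 else -1)"
    unfolding Rset_def by blast
  have "\<sigma> = rcfg L a b w v"
  proof
    fix y show "\<sigma> y = rcfg L a b w v y" using eq Omega_off[OF om, of y] unfolding rcfg_def by auto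
  qed
  then show ?thesis using ab by blast
qed

lemma mod_small: "(x::nat) < 2*L \<Longrightarrow> x mod L = (if x < L then x else x - L)"
proof (cases "x < L")
  case False
  assume "x < 2*L"
  then have "x - L < L" using False by linarith
  then show ?thesis using False le_mod_geq[of L x] by simp
qed simp

lemma mod_inj: assumes "i < L" "i' < (L::nat)" "(a+i) mod L = (a+i') mod L" shows "i = i'"
proof -
  define c where "c = a mod L"
  have c: "c < L" using assms by (simp add: c_def)
  have e: "(c + i) mod L = (c + i') mod L" using assms(3) by (simp add: c_def mod_add_left_eq)
  have A: "(c + i) mod L = (if c + i < L then c + i else c + i - L)" using c assms(1) by (intro mod_small) linarith
  have B: "(c + i') mod L = (if c + i' < L then c + i' else c + i' - L)" using c assms(2) by (intro mod_small) linarith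
  show ?thesis
  proof (cases "c + i < L")
    case True
    show ?thesis
    proof (cases "c + i' < L")
      case True2: True then show ?thesis using e A B True by simp
    next
      case False then show ?thesis using e A B True c assms(2) by simp
    qed
  next
    case False
    show ?thesis
    proof (cases "c + i' < L")
      case True then show ?thesis using e A B False c assms(1) by simp
    next
      case False2: False then show ?thesis using e A B False by simp
    qed
  qed
qed

lemma card_rect: assumes "w \<le> L" "v \<le> L" shows "card (rect L a b w v) = w * v"
proof -
  let ?f = "\<lambda>p. ((a + fst p) mod L, (b + snd p) mod L)"
  have eq: "rect L a b w v = ?f ` ({..<w} \<times> {..<v})"
  proof
    show "rect L a b w v \<subseteq> ?f ` ({..<w} \<times> {..<v})"
    proof
      fix y assume "y \<in> rect L a b w v"
      then obtain i j where "i < w" "j < v" "y = ((a+i) mod L, (b+j) mod L)" unfolding rect_def by blast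
      then show "y \<in> ?f ` ({..<w} \<times> {..<v})" by (intro image_eqI[of _ _ "(i,j)"]) auto
    qed
  next
    show "?f ` ({..<w} \<times> {..<v}) \<subseteq> rect L a b w v"
    proof
      fix y assume "y \<in> ?f ` ({..<w} \<times> {..<v})"
      then obtain i j where "i < w" "j < v" "y = ((a+i) mod L, (b+j) mod L)" by auto
      then show "y \<in> rect L a b w v" unfolding rect_def by blast
    qed
  qed
  have inj: "inj_on ?f ({..<w} \<times> {..<v})"
  proof (rule inj_onI)
    fix p q assume p: "p \<in> {..<w} \<times> {..<v}" and q: "q \<in> {..<w} \<times> {..<v}" and e: "?f p = ?f q"
    have "fst p < L" "fst q < L" "snd p < L" "snd q < L" using p q assms by auto
    moreover have "(a + fst p) mod L = (a + fst q) mod L" "(b + snd p) mod L = (b + snd q) mod L" using e by auto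
    ultimately have "fst p = fst q" "snd p = snd q" using mod_inj by blast+
    then show "p = q" by (simp add: prod_eq_iff)
  qed
  show ?thesis unfolding eq card_image[OF inj] by (simp add: card_cartesian_product)
qed

lemma rect_torus: "0 < L \<Longrightarrow> rect L a b w v \<subseteq> torus L"
  unfolding rect_def torus_def by auto

lemma spin_vals: "spin_shift 1 (-1) = 0" "spin_shift (-1) (-1) = 1" "spin_shift 1 0 = 1" "spin_shift (-1) 0 = -1"
  unfolding spin_shift_def by simp_all

lemma flip_energy:
  fixes h :: real and n :: nat
  assumes L: "n*(n+1) + 2 \<le> L" and n2: "2 \<le> n" and h: "0 \<le> h" "h \<le> 1" "h * n \<le> 2"
    and wv: "(w = n \<and> v = n + 1) \<or> (w = n + 1 \<and> v = n)"
    and x: "x \<in> torus L" and s: "s \<in> {1,-1}"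
  shows "4 \<le> DH h L (flip (rcfg L a b w v) x s)"
proof -
  define R where "R = rect L a b w v"
  define \<sigma> where "\<sigma> = rcfg L a b w v"
  define \<tau> where "\<tau> = flip \<sigma> x s"
  have L3: "3 \<le> L" and L0: "0 < L" using L n2 by (auto simp: algebra_simps)
  have Rt: "R \<subseteq> torus L" using rect_torus[OF L0] by (simp add: R_def)
  have wvL: "w \<le> L" "v \<le> L" using wv L n2 by (auto simp: algebra_simps)
  have cR: "card R = n*(n+1)" unfolding R_def card_rect[OF wvL] using wv by auto
  have fR: "finite R" using Rt finite_subset finite_torus by blast
  have \<tau>v: "\<tau> y = (if y = x then spin_shift s (\<sigma> x) else \<sigma> y)" for y
    unfolding \<tau>_def flip_def by simp
  have \<sigma>v: "\<sigma> y = (if y \<in> torus L then (if y \<in> R then 0 else -1) else 0)" for y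
    unfolding \<sigma>_def rcfg_def R_def by simp
  have ssv: "spin_shift s v \<in> {-1,0,1}" for v unfolding spin_shift_def by auto
  have om: "\<tau> \<in> Omega L" unfolding Omega_def using x ssv by (auto simp: \<tau>v \<sigma>v)
  let ?S = "Sset L \<tau>" and ?P = "Pset L \<tau>"
  have main: "4 \<le> DH h L \<tau>" if cS: "card ?S < L" and
     cases: "(card ?S = n*(n+1)+1 \<and> card ?P \<le> 1) \<or> (card ?S = n*(n+1) \<and> card ?P = 1 \<and> 1 \<le> card (fst ` ?P) \<and> 1 \<le> card (snd ` ?P))
                \<or> (card ?S = n*(n+1) - 1 \<and> card ?P = 0)"
  proof -
    have "card ?S \<le> card (fst ` ?S) * card (snd ` ?S)" by (rule card_le_proj) simp
    from arithF[OF h n2 this cases] energy_bound[OF L3 om cS, of h] show ?thesis by linarith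
  qed
  consider (out) "x \<notin> R" | (p) "x \<in> R" "s = 1" | (m) "x \<in> R" "s = -1" using s by auto
  then have "4 \<le> DH h L \<tau>"
  proof cases
    case out
    have sx: "\<sigma> x = -1" using x out by (simp add: \<sigma>v)
    have "?S = insert x R" using Rt x out s unfolding Sset_def by (auto simp: \<tau>v \<sigma>v sx spin_vals)
    then have cS: "card ?S = n*(n+1)+1" using out fR cR by simp
    have "?P \<subseteq> {x}" unfolding Pset_def using Rt by (auto simp: \<tau>v \<sigma>v)
    then have "card ?P \<le> 1" using card_mono[of "{x}" ?P] by simp
    then show ?thesis using main cS L by simp
  next
    case p
    have sx: "\<sigma> x = 0" using x p by (simp add: \<sigma>v)
    have "?S = R" using Rt x p unfolding Sset_def by (auto simp: \<tau>v \<sigma>v sx spin_vals)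
    then have cS: "card ?S = n*(n+1)" using cR by simp
    have "?P = {x}" unfolding Pset_def using Rt x p by (auto simp: \<tau>v \<sigma>v sx spin_vals)
    then show ?thesis using main cS L by simp
  next
    case m
    have sx: "\<sigma> x = 0" using x m by (simp add: \<sigma>v)
    have "?S = R - {x}" using Rt x m unfolding Sset_def by (auto simp: \<tau>v \<sigma>v sx spin_vals)
    then have cS: "card ?S = n*(n+1) - 1" using cR fR m by simp
    have "?P = {}" unfolding Pset_def using Rt x m by (auto simp: \<tau>v \<sigma>v sx spin_vals)
    then show ?thesis using main cS L by simp
  qed
  then show ?thesis unfolding \<tau>_def \<sigma>_def .
qed

definition Rel :: "nat \<Rightarrow> site set \<Rightarrow> (site \<times> site) set" where
  "Rel L S = {(u,v). u \<in> S \<and> v \<in> S \<and> (v \<in> nbrs L u \<or> u \<in> nbrs L v)}"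
definition comp :: "nat \<Rightarrow> site set \<Rightarrow> site \<Rightarrow> site set" where
  "comp L S x = {y. (x,y) \<in> (Rel L S)\<^sup>*}"
definition restr :: "nat \<Rightarrow> config \<Rightarrow> site set \<Rightarrow> config" where
  "restr L \<sigma> X = (\<lambda>y. if y \<in> X then \<sigma> y else if y \<in> torus L then -1 else 0)"

lemma comp_sub: assumes "x \<in> S" shows "comp L S x \<subseteq> S"
proof
  fix y assume "y \<in> comp L S x"
  then have "(x,y) \<in> (Rel L S)\<^sup>*" by (simp add: comp_def)
  then show "y \<in> S" by (induct rule: rtrancl_induct) (use assms in \<open>auto simp: Rel_def\<close>)
qed

lemma comp_self: "x \<in> comp L S x" by (simp add: comp_def)

lemma comp_closed: assumes "x \<in> S" "y \<in> comp L S x" "z \<in> S" "z \<in> nbrs L y \<or> y \<in> nbrs L z"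
  shows "z \<in> comp L S x"
proof -
  have "y \<in> S" using comp_sub[OF assms(1)] assms(2) by auto
  then have "(y,z) \<in> Rel L S" using assms unfolding Rel_def by auto
  then show ?thesis using assms(2) unfolding comp_def by (auto intro: rtrancl_into_rtrancl)
qed

lemma restr_Omega: "\<sigma> \<in> Omega L \<Longrightarrow> X \<subseteq> torus L \<Longrightarrow> restr L \<sigma> X \<in> Omega L"
  unfolding Omega_def restr_def by auto

lemma Sset_restr: "X \<subseteq> Sset L \<sigma> \<Longrightarrow> Sset L (restr L \<sigma> X) = X"
  unfolding Sset_def restr_def by auto

lemma restr_recon: assumes om: "\<sigma> \<in> Omega L" and AS: "A \<subseteq> Sset L \<sigma>"
  shows "\<sigma> = (\<lambda>y. if restr L \<sigma> A y \<noteq> -1 then restr L \<sigma> A y else restr L \<sigma> (Sset L \<sigma> - A) y)"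
proof
  fix y show "\<sigma> y = (if restr L \<sigma> A y \<noteq> -1 then restr L \<sigma> A y else restr L \<sigma> (Sset L \<sigma> - A) y)"
    using AS Omega_off[OF om, of y] unfolding restr_def Sset_def by auto
qed

lemma DH_add:
  assumes L0: "0 < L" and om: "\<sigma> \<in> Omega L" and AS: "A \<subseteq> Sset L \<sigma>"
    and cl: "\<And>y z. y \<in> A \<Longrightarrow> z \<in> Sset L \<sigma> \<Longrightarrow> z \<in> nbrs L y \<or> y \<in> nbrs L z \<Longrightarrow> z \<in> A"
  shows "DH h L \<sigma> = DH h L (restr L \<sigma> A) + DH h L (restr L \<sigma> (Sset L \<sigma> - A))"
proof -
  let ?a = "restr L \<sigma> A" and ?b = "restr L \<sigma> (Sset L \<sigma> - A)"
  have pt: "?a x = (if x \<in> A then \<sigma> x else -1)" "?b x = (if x \<in> Sset L \<sigma> - A then \<sigma> x else -1)"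
    "x \<notin> Sset L \<sigma> \<Longrightarrow> \<sigma> x = -1" if "x \<in> torus L" for x
    using that AS unfolding restr_def Sset_def by auto
  have e: "(\<sigma> y - \<sigma> x)^2 = (?a y - ?a x)^2 + (?b y - ?b x)^2" if x: "x \<in> torus L" and y: "y \<in> nbrs L x" for x y
  proof -
    have yt: "y \<in> torus L" using nbrs_torus[OF L0 y x] .
    have c1: "x \<in> A \<Longrightarrow> y \<in> Sset L \<sigma> \<Longrightarrow> y \<in> A" using cl y by blast
    have c2: "y \<in> A \<Longrightarrow> x \<in> Sset L \<sigma> \<Longrightarrow> x \<in> A" using cl y by blast
    show ?thesis using pt[OF x] pt[OF yt] c1 c2 AS by (cases "y \<in> Sset L \<sigma>"; cases "x \<in> Sset L \<sigma>"; auto simp: power2_eq_square)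
  qed
  have f: "\<sigma> x + 1 = (?a x + 1) + (?b x + 1)" if x: "x \<in> torus L" for x
    using pt[OF x] AS by auto
  have E: "Eng L \<sigma> = Eng L ?a + Eng L ?b"
    unfolding Eng_def by (simp add: e sum.distrib algebra_simps cong: sum.cong)
  have F: "(\<Sum>x\<in>torus L. real_of_int (\<sigma> x + 1)) = (\<Sum>x\<in>torus L. real_of_int (?a x + 1)) + (\<Sum>x\<in>torus L. real_of_int (?b x + 1))"
    by (simp add: f sum.distrib[symmetric] cong: sum.cong)
  show ?thesis unfolding DH_def E F by (simp add: algebra_simps)
qed

definition bx :: "nat \<Rightarrow> site \<Rightarrow> nat \<Rightarrow> site set" where
  "bx L x n = {y. \<exists>i j::int. \<bar>i\<bar> \<le> int n \<and> \<bar>j\<bar> \<le> int n \<and> int (fst y) = (int (fst x) + i) mod int L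
      \<and> int (snd y) = (int (snd x) + j) mod int L}"

lemma H1: "b < L \<Longrightarrow> int b = int b mod int L" by simp
lemma H2: "int (Suc a mod L) = (int a + 1) mod int L" by (simp add: of_nat_mod add.commute)
lemma H3: assumes "0 < L" shows "int ((a + L - Suc 0) mod L) = (int a - 1) mod int L"
proof -
  have "int ((a + L - Suc 0) mod L) = int (a + L - Suc 0) mod int L" by (simp add: of_nat_mod)
  also have "int (a + L - Suc 0) = (int a - 1) + int L" using assms by simp
  finally show ?thesis by simp
qed

lemma step_coord: assumes L0: "0 < L" and u: "u \<in> torus L" and v: "v \<in> nbrs L u"
  shows "\<exists>di dj::int. \<bar>di\<bar> \<le> 1 \<and> \<bar>dj\<bar> \<le> 1 \<and> int (fst v) = (int (fst u) + di) mod int L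
     \<and> int (snd v) = (int (snd u) + dj) mod int L"
proof -
  obtain a b where ab: "u = (a,b)" "a < L" "b < L" using u unfolding torus_def by auto
  from v ab have "v = (Suc a mod L, b) \<or> v = ((a + L - Suc 0) mod L, b) \<or> v = (a, Suc b mod L) \<or> v = (a, (b + L - Suc 0) mod L)"
    unfolding nbrs_def by auto
  then show ?thesis
  proof (elim disjE)
    assume "v = (Suc a mod L, b)" then show ?thesis using ab H1[of b L] H2[of a L] by (intro exI[of _ 1] exI[of _ 0]) simp
  next
    assume "v = ((a + L - Suc 0) mod L, b)" then show ?thesis using ab H1[of b L] H3[OF L0, of a] by (intro exI[of _ "-1"] exI[of _ 0]) simp
  next
    assume "v = (a, Suc b mod L)" then show ?thesis using ab H1[of a L] H2[of b L] by (intro exI[of _ 0] exI[of _ 1]) simp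
  next
    assume "v = (a, (b + L - Suc 0) mod L)" then show ?thesis using ab H1[of a L] H3[OF L0, of b] by (intro exI[of _ 0] exI[of _ "-1"]) simp
  qed
qed

lemma rev_coord: assumes "fv < L" "int fv = (int fu + d) mod int L" shows "int fu mod int L = (int fv - d) mod int L"
proof -
  have "(int fv - d) mod int L = ((int fu + d) mod int L - d) mod int L" using assms by simp
  also have "\<dots> = (int fu + d - d) mod int L" by (simp add: mod_diff_left_eq)
  finally show ?thesis by simp
qed

lemma step_coord2: assumes L0: "0 < L" and u: "u \<in> torus L" and v: "v \<in> torus L" and uv: "v \<in> nbrs L u \<or> u \<in> nbrs L v"
  shows "\<exists>di dj::int. \<bar>di\<bar> \<le> 1 \<and> \<bar>dj\<bar> \<le> 1 \<and> int (fst v) = (int (fst u) + di) mod int L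
     \<and> int (snd v) = (int (snd u) + dj) mod int L"
  using uv
proof
  assume "v \<in> nbrs L u" then show ?thesis using step_coord[OF L0 u] by blast
next
  assume "u \<in> nbrs L v"
  then obtain di dj where d: "\<bar>di\<bar> \<le> 1" "\<bar>dj\<bar> \<le> 1" "int (fst u) = (int (fst v) + di) mod int L"
     "int (snd u) = (int (snd v) + dj) mod int L" using step_coord[OF L0 v] by blast
  have "fst u < L" "snd u < L" "fst v < L" "snd v < L" using u v unfolding torus_def by auto
  then have "int (fst v) = (int (fst u) + - di) mod int L" "int (snd v) = (int (snd u) + - dj) mod int L"
    using rev_coord[of "fst u" L "fst v" di] rev_coord[of "snd u" L "snd v" dj] d by auto
  then show ?thesis using d by (intro exI[of _ "-di"] exI[of _ "-dj"]) auto
qed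

lemma disp: assumes L0: "0 < L" and St: "S \<subseteq> torus L" and x: "x \<in> torus L"
  shows "(x,y) \<in> (Rel L S)^^n \<Longrightarrow> y \<in> bx L x n"
proof (induct n arbitrary: y)
  case 0
  then have "y = x" by simp
  moreover have "fst x < L" "snd x < L" using x unfolding torus_def by auto
  ultimately show ?case unfolding bx_def by (intro CollectI exI[of _ 0]) simp
next
  case (Suc n)
  then obtain z where xz: "(x,z) \<in> (Rel L S)^^n" and zy: "(z,y) \<in> Rel L S" by auto
  from Suc.hyps[OF xz] obtain i j where ij: "\<bar>i\<bar> \<le> int n" "\<bar>j\<bar> \<le> int n"
    "int (fst z) = (int (fst x) + i) mod int L" "int (snd z) = (int (snd x) + j) mod int L"
    unfolding bx_def by blast
  have zt: "z \<in> torus L" "y \<in> torus L" using zy St unfolding Rel_def by auto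
  obtain di dj where d: "\<bar>di\<bar> \<le> 1" "\<bar>dj\<bar> \<le> 1" "int (fst y) = (int (fst z) + di) mod int L"
     "int (snd y) = (int (snd z) + dj) mod int L"
    using step_coord2[OF L0 zt] zy unfolding Rel_def by blast
  have "int (fst y) = (int (fst x) + (i + di)) mod int L" using d(3) ij(3) by (simp add: mod_add_left_eq add.assoc)
  moreover have "int (snd y) = (int (snd x) + (j + dj)) mod int L" using d(4) ij(4) by (simp add: mod_add_left_eq add.assoc)
  moreover have "\<bar>i + di\<bar> \<le> int (Suc n)" "\<bar>j + dj\<bar> \<le> int (Suc n)" using ij d by auto
  ultimately show ?case unfolding bx_def by blast
qed

lemma box_mono: "m \<le> n \<Longrightarrow> bx L x m \<subseteq> bx L x n"
  unfolding bx_def by force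

lemma comp_box: assumes L0: "0 < L" and St: "S \<subseteq> torus L" and x: "x \<in> S"
  shows "comp L S x \<subseteq> bx L x (card S * card S)"
proof
  fix y assume "y \<in> comp L S x"
  then have "(x,y) \<in> (Rel L S)\<^sup>*" by (simp add: comp_def)
  then obtain k where "(x,y) \<in> (Rel L S)^^k" using rtrancl_power by blast
  have fS: "finite S" using St finite_subset finite_torus by blast
  have RS: "Rel L S \<subseteq> S \<times> S" unfolding Rel_def by auto
  then have fR: "finite (Rel L S)" using fS finite_subset by blast
  have cR: "card (Rel L S) \<le> card S * card S" using card_mono[OF _ RS] fS by (simp add: card_cartesian_product)
  from relpow_finite_bounded[OF fR] \<open>(x,y) \<in> (Rel L S)^^k\<close>
  obtain m where "m \<le> card (Rel L S)" "(x,y) \<in> (Rel L S)^^m" by blast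
  then have "y \<in> bx L x m" using disp[OF L0 St] x St by blast
  moreover have "m \<le> card S * card S" using \<open>m \<le> card (Rel L S)\<close> cR by linarith
  ultimately show "y \<in> bx L x (card S * card S)" using box_mono[of m "card S * card S" L x] by blast
qed

lemma box_card: "finite (bx L x n) \<and> card (bx L x n) \<le> (2*n+1)^2"
proof -
  let ?I = "{-int n..int n}"
  let ?f = "\<lambda>p. (nat ((int (fst x) + fst p) mod int L), nat ((int (snd x) + snd p) mod int L))"
  have sub: "bx L x n \<subseteq> ?f ` (?I \<times> ?I)"
  proof
    fix y assume "y \<in> bx L x n"
    then obtain i j where ij: "\<bar>i\<bar> \<le> int n" "\<bar>j\<bar> \<le> int n" "int (fst y) = (int (fst x) + i) mod int L"
      "int (snd y) = (int (snd x) + j) mod int L" unfolding bx_def by blast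
    have "y = ?f (i,j)" using ij(3,4) by (simp add: prod_eq_iff) (metis nat_int)
    moreover have "(i,j) \<in> ?I \<times> ?I" using ij(1,2) by auto
    ultimately show "y \<in> ?f ` (?I \<times> ?I)" by blast
  qed
  have fin: "finite (?f ` (?I \<times> ?I))" by simp
  have "card (bx L x n) \<le> card (?f ` (?I \<times> ?I))" by (rule card_mono[OF fin sub])
  also have "\<dots> \<le> card (?I \<times> ?I)" by (rule card_image_le) simp
  also have "\<dots> = (2*n+1)^2"
  proof -
    have "card ?I = 2*n+1" by simp
    then show ?thesis by (simp add: card_cartesian_product power2_eq_square)
  qed
  finally show ?thesis using finite_subset[OF sub fin] by simp
qed

lemma card_cfg: assumes fB: "finite B" and Bt: "B \<subseteq> torus L"
  shows "finite {\<tau>\<in>Omega L. Sset L \<tau> \<subseteq> B} \<and> card {\<tau>\<in>Omega L. Sset L \<tau> \<subseteq> B} \<le> 3 ^ card B"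
proof -
  let ?A = "{\<tau>\<in>Omega L. Sset L \<tau> \<subseteq> B}"
  let ?P = "PiE B (\<lambda>_. {-1,0,1::int})"
  have inj: "inj_on (\<lambda>\<tau>. restrict \<tau> B) ?A"
  proof (rule inj_onI)
    fix s t assume s: "s \<in> ?A" and t: "t \<in> ?A" and e: "restrict s B = restrict t B"
    show "s = t"
    proof
      fix y
      show "s y = t y"
      proof (cases "y \<in> B")
        case True then show ?thesis using e by (metis restrict_apply')
      next
        case False
        show ?thesis
        proof (cases "y \<in> torus L")
          case True then have "s y = -1" "t y = -1" using s t False unfolding Sset_def by auto
          then show ?thesis by simp
        next
          case False then have "s y = 0" "t y = 0" using s t Omega_off[of _ L y] by auto
          then show ?thesis by simp
        qed
      qed
    qed
  qed
  have img: "(\<lambda>\<tau>. restrict \<tau> B) ` ?A \<subseteq> ?P" using Bt Omega_vals by (fastforce simp: PiE_def Pi_def)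
  have fP: "finite ?P" using fB by (simp add: finite_PiE)
  have cP: "card ?P = 3 ^ card B" using fB by (simp add: card_PiE numeral_3_eq_3)
  show ?thesis using inj_on_finite[OF inj img fP] card_inj_on_le[OF inj img fP] cP by simp
qed

lemma finite_Omega: "finite (Omega L)"
proof -
  have "Omega L = {\<tau>\<in>Omega L. Sset L \<tau> \<subseteq> torus L}" unfolding Sset_def by auto
  then show ?thesis using card_cfg[of "torus L" L] by simp
qed

definition wt :: "real \<Rightarrow> real \<Rightarrow> nat \<Rightarrow> config \<Rightarrow> real" where
  "wt h \<beta> L \<sigma> = exp (-\<beta> * DH h L \<sigma>)"

definition Clu :: "nat \<Rightarrow> nat \<Rightarrow> config set" where
  "Clu L K = {\<tau>\<in>Omega L. 1 \<le> card (Sset L \<tau>) \<and> card (Sset L \<tau>) \<le> K \<and> (\<exists>x\<in>torus L. Sset L \<tau> \<subseteq> bx L x (K*K))}"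

definition Dk :: "nat \<Rightarrow> nat \<Rightarrow> config set" where
  "Dk L k = {\<sigma>\<in>Omega L. \<sigma> \<noteq> minus_one L \<and> card (Sset L \<sigma>) \<le> k}"
definition Vk :: "nat \<Rightarrow> nat \<Rightarrow> config set" where
  "Vk L k = {\<sigma>\<in>Omega L. card (Sset L \<sigma>) \<le> k}"

lemma Sset_empty: assumes "\<sigma> \<in> Omega L" "Sset L \<sigma> = {}" shows "\<sigma> = minus_one L"
proof
  fix y show "\<sigma> y = minus_one L y" using assms Omega_off[OF assms(1), of y] unfolding Sset_def minus_one_def
    by (cases y) auto
qed

lemma Sset_minus_one: "Sset L (minus_one L) = {}" unfolding Sset_def minus_one_def by auto

lemma wt_pos: "0 < wt h \<beta> L \<sigma>" unfolding wt_def by simp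

lemma finite_Clu: "finite (Clu L K)" using finite_Omega by (rule rev_finite_subset) (auto simp: Clu_def)
lemma finite_Dk: "finite (Dk L k)" using finite_Omega by (rule rev_finite_subset) (auto simp: Dk_def)
lemma finite_Vk: "finite (Vk L k)" using finite_Omega by (rule rev_finite_subset) (auto simp: Vk_def)

lemma card_Clu: "card (Clu L K) \<le> card (torus L) * 3 ^ ((2*(K*K)+1)^2)"
proof -
  let ?M = "(2*(K*K)+1)^2"
  let ?A = "\<lambda>x. {\<tau>\<in>Omega L. Sset L \<tau> \<subseteq> bx L x (K*K) \<inter> torus L}"
  have sub: "Clu L K \<subseteq> (\<Union>x\<in>torus L. ?A x)" unfolding Clu_def Sset_def by auto
  have fA: "finite (?A x)" and cA: "card (?A x) \<le> 3 ^ ?M" for x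
  proof -
    have fb: "finite (bx L x (K*K) \<inter> torus L)" by simp
    have cb: "card (bx L x (K*K) \<inter> torus L) \<le> ?M"
      using box_card[of L x "K*K"] card_mono[of "bx L x (K*K)" "bx L x (K*K) \<inter> torus L"] by auto
    show "finite (?A x)" using card_cfg[OF fb] by auto
    have "card (?A x) \<le> 3 ^ card (bx L x (K*K) \<inter> torus L)" using card_cfg[OF fb] by auto
    also have "\<dots> \<le> 3 ^ ?M" using cb by (intro power_increasing) auto
    finally show "card (?A x) \<le> 3 ^ ?M" .
  qed
  have "card (Clu L K) \<le> card (\<Union>x\<in>torus L. ?A x)" using sub fA by (intro card_mono) auto
  also have "\<dots> \<le> (\<Sum>x\<in>torus L. card (?A x))" by (rule card_UN_le) simp
  also have "\<dots> \<le> (\<Sum>x\<in>torus L. 3 ^ ?M)" by (rule sum_mono) (rule cA)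
  finally show ?thesis by simp
qed

lemma Q_bound:
  fixes h \<beta> :: real and n :: nat
  assumes h: "0 < h" "h \<le> 2" "h * n \<le> 2" and L: "n*(n+1) + 2 \<le> L" and \<beta>: "0 \<le> \<beta>" and n2: "2 \<le> n"
  shows "(\<Sum>\<tau>\<in>Clu L (n*(n+1)). wt h \<beta> L \<tau>) \<le> real (card (torus L)) * 3 ^ ((2*((n*(n+1))*(n*(n+1)))+1)^2) * exp (-2*\<beta>)"
proof -
  let ?K = "n*(n+1)"
  have L3: "3 \<le> L"
  proof -
    have "1 \<le> n*(n+1)" using n2 by simp
    then show ?thesis using L by linarith
  qed
  have "wt h \<beta> L \<tau> \<le> exp (-2*\<beta>)" if "\<tau> \<in> Clu L ?K" for \<tau>
  proof -
    have "2 \<le> DH h L \<tau>" using that L unfolding Clu_def by (intro energy_ge2[OF L3 _ _ _ _ h]) auto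
    then have "-\<beta> * DH h L \<tau> \<le> -2*\<beta>" using \<beta> mult_left_mono[of 2 "DH h L \<tau>" \<beta>] by (simp add: mult.commute)
    then show ?thesis unfolding wt_def by simp
  qed
  then have "(\<Sum>\<tau>\<in>Clu L ?K. wt h \<beta> L \<tau>) \<le> real (card (Clu L ?K)) * exp (-2*\<beta>)"
    using sum_mono[of "Clu L ?K" "wt h \<beta> L" "\<lambda>_. exp (-2*\<beta>)"] by simp
  also have "\<dots> \<le> real (card (torus L) * 3 ^ ((2*(?K*?K)+1)^2)) * exp (-2*\<beta>)"
    using card_Clu[of L ?K] by (intro mult_right_mono) (simp only: of_nat_le_iff, simp)
  finally show ?thesis by simp
qed

definition cA :: "nat \<Rightarrow> config \<Rightarrow> site set" where
  "cA L \<sigma> = comp L (Sset L \<sigma>) (SOME x. x \<in> Sset L \<sigma>)"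
definition splitc :: "nat \<Rightarrow> config \<Rightarrow> config \<times> config" where
  "splitc L \<sigma> = (restr L \<sigma> (cA L \<sigma>), restr L \<sigma> (Sset L \<sigma> - cA L \<sigma>))"

lemma Sset_torus: "Sset L \<sigma> \<subseteq> torus L" unfolding Sset_def by auto

lemma T_rec:
  assumes L0: "0 < L" and k: "1 \<le> k" "k \<le> K" and KL: "K < L"
  shows "(\<Sum>\<sigma>\<in>Dk L k. wt h \<beta> L \<sigma>) \<le> (\<Sum>\<tau>\<in>Clu L K. wt h \<beta> L \<tau>) * (\<Sum>\<tau>\<in>Vk L (k-1). wt h \<beta> L \<tau>)"
proof -
  let ?g = "\<lambda>p. wt h \<beta> L (fst p) * wt h \<beta> L (snd p)"
  have props: "wt h \<beta> L \<sigma> = ?g (splitc L \<sigma>) \<and> fst (splitc L \<sigma>) \<in> Clu L K \<and> snd (splitc L \<sigma>) \<in> Vk L (k-1)"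
    if s: "\<sigma> \<in> Dk L k" for \<sigma>
  proof -
    let ?S = "Sset L \<sigma>"
    let ?x = "SOME x. x \<in> ?S"
    let ?A = "cA L \<sigma>"
    have om: "\<sigma> \<in> Omega L" and cS: "card ?S \<le> k" using s unfolding Dk_def by auto
    have ne: "?S \<noteq> {}" using s Sset_empty unfolding Dk_def by blast
    then have x: "?x \<in> ?S" by (meson ex_in_conv someI_ex)
    have AS: "?A \<subseteq> ?S" unfolding cA_def by (rule comp_sub[OF x])
    have xA: "?x \<in> ?A" unfolding cA_def by (rule comp_self)
    have St: "?S \<subseteq> torus L" by (rule Sset_torus)
    have fS: "finite ?S" by simp
    have cl: "\<And>y z. y \<in> ?A \<Longrightarrow> z \<in> ?S \<Longrightarrow> z \<in> nbrs L y \<or> y \<in> nbrs L z \<Longrightarrow> z \<in> ?A"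
      unfolding cA_def using comp_closed[OF x] by blast
    have add: "DH h L \<sigma> = DH h L (restr L \<sigma> ?A) + DH h L (restr L \<sigma> (?S - ?A))"
      by (rule DH_add[OF L0 om AS cl])
    have w: "wt h \<beta> L \<sigma> = ?g (splitc L \<sigma>)"
      unfolding splitc_def wt_def add by (simp add: algebra_simps exp_add[symmetric])
    have c1: "fst (splitc L \<sigma>) \<in> Clu L K"
    proof -
      have SA: "Sset L (restr L \<sigma> ?A) = ?A" using AS by (rule Sset_restr)
      have cA1: "1 \<le> card ?A" using xA AS fS finite_subset[OF AS fS] by (metis One_nat_def Suc_leI card_gt_0_iff empty_iff)
      have cAK: "card ?A \<le> K" using card_mono[OF fS AS] cS k by linarith
      have "?A \<subseteq> bx L ?x (card ?S * card ?S)" unfolding cA_def by (rule comp_box[OF L0 St x])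
      also have "\<dots> \<subseteq> bx L ?x (K*K)" using cS k by (intro box_mono mult_mono) auto
      finally have "?A \<subseteq> bx L ?x (K*K)" .
      moreover have "?x \<in> torus L" using x St by auto
      moreover have "restr L \<sigma> ?A \<in> Omega L" using AS St by (intro restr_Omega[OF om]) auto
      ultimately show ?thesis unfolding Clu_def splitc_def using SA cA1 cAK by auto
    qed
    have c2: "snd (splitc L \<sigma>) \<in> Vk L (k-1)"
    proof -
      have SB: "Sset L (restr L \<sigma> (?S - ?A)) = ?S - ?A" by (rule Sset_restr) auto
      have "card (?S - ?A) = card ?S - card ?A" using AS fS by (simp add: card_Diff_subset finite_subset)
      moreover have "1 \<le> card ?A" using xA AS fS finite_subset[OF AS fS] by (metis One_nat_def Suc_leI card_gt_0_iff empty_iff)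
      ultimately have "card (?S - ?A) \<le> k - 1" using cS by linarith
      moreover have "restr L \<sigma> (?S - ?A) \<in> Omega L" using St by (intro restr_Omega[OF om]) auto
      ultimately show ?thesis unfolding Vk_def splitc_def using SB by auto
    qed
    show ?thesis using w c1 c2 by blast
  qed
  have inj: "inj_on (splitc L) (Dk L k)"
  proof (rule inj_onI)
    fix s t assume s: "s \<in> Dk L k" and t: "t \<in> Dk L k" and e: "splitc L s = splitc L t"
    have ne: "Sset L s \<noteq> {}" "Sset L t \<noteq> {}" using s t Sset_empty unfolding Dk_def by blast+
    have AS: "cA L s \<subseteq> Sset L s" "cA L t \<subseteq> Sset L t" unfolding cA_def
      using comp_sub ne by (meson ex_in_conv someI_ex)+
    have oms: "s \<in> Omega L" "t \<in> Omega L" using s t unfolding Dk_def by auto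
    have "s = (\<lambda>y. if restr L s (cA L s) y \<noteq> -1 then restr L s (cA L s) y else restr L s (Sset L s - cA L s) y)"
      by (rule restr_recon[OF oms(1) AS(1)])
    also have "\<dots> = (\<lambda>y. if restr L t (cA L t) y \<noteq> -1 then restr L t (cA L t) y else restr L t (Sset L t - cA L t) y)"
    proof -
      have e1: "restr L s (cA L s) = restr L t (cA L t)" and e2: "restr L s (Sset L s - cA L s) = restr L t (Sset L t - cA L t)"
        using e unfolding splitc_def by simp_all
      show ?thesis unfolding e1 e2 ..
    qed
    also have "\<dots> = t" by (rule restr_recon[OF oms(2) AS(2), symmetric])
    finally show "s = t" .
  qed
  have "(\<Sum>\<sigma>\<in>Dk L k. wt h \<beta> L \<sigma>) = (\<Sum>\<sigma>\<in>Dk L k. ?g (splitc L \<sigma>))"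
    using props by (intro sum.cong) auto
  also have "\<dots> = (\<Sum>p\<in>splitc L ` Dk L k. ?g p)" using sum.reindex[OF inj, of ?g] by (simp add: comp_def)
  also have "\<dots> \<le> (\<Sum>p\<in>Clu L K \<times> Vk L (k-1). ?g p)"
  proof (rule sum_mono2)
    show "finite (Clu L K \<times> Vk L (k-1))" using finite_Clu finite_Vk by simp
    show "splitc L ` Dk L k \<subseteq> Clu L K \<times> Vk L (k-1)"
    proof
      fix p assume "p \<in> splitc L ` Dk L k"
      then obtain \<sigma> where "\<sigma> \<in> Dk L k" "p = splitc L \<sigma>" by blast
      then show "p \<in> Clu L K \<times> Vk L (k-1)" using props[of \<sigma>] by (simp add: mem_Times_iff)
    qed
    show "0 \<le> ?g p" for p using wt_pos by (simp add: less_imp_le)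
  qed
  also have "\<dots> = (\<Sum>\<tau>\<in>Clu L K. wt h \<beta> L \<tau>) * (\<Sum>\<tau>\<in>Vk L (k-1). wt h \<beta> L \<tau>)"
    by (simp add: sum_product sum.cartesian_product split_beta)
  finally show ?thesis .
qed

lemma Dk0: "Dk L 0 = {}"
  unfolding Dk_def using Sset_empty by (auto simp: card_eq_0_iff)

lemma wt_minus_one: "0 < L \<Longrightarrow> wt h \<beta> L (minus_one L) = 1"
  unfolding wt_def by (simp add: DH_minus_one)

lemma Vk_Dk: "Vk L k = insert (minus_one L) (Dk L k)" and mo_notin: "minus_one L \<notin> Dk L k"
  unfolding Vk_def Dk_def using minus_one_Omega Sset_minus_one by auto

lemma T_all:
  assumes L0: "0 < L" and KL: "K < L" and Q: "(\<Sum>\<tau>\<in>Clu L K. wt h \<beta> L \<tau>) \<le> 1/2"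
  shows "k \<le> K \<Longrightarrow> (\<Sum>\<sigma>\<in>Dk L k. wt h \<beta> L \<sigma>) \<le> 2 * (\<Sum>\<tau>\<in>Clu L K. wt h \<beta> L \<tau>)"
proof (induct k)
  case 0
  have "0 \<le> (\<Sum>\<tau>\<in>Clu L K. wt h \<beta> L \<tau>)" using wt_pos by (simp add: sum_nonneg less_imp_le)
  then show ?case by (simp add: Dk0)
next
  case (Suc k)
  let ?Q = "(\<Sum>\<tau>\<in>Clu L K. wt h \<beta> L \<tau>)"
  have Q0: "0 \<le> ?Q" using wt_pos by (simp add: sum_nonneg less_imp_le)
  have IH: "(\<Sum>\<sigma>\<in>Dk L k. wt h \<beta> L \<sigma>) \<le> 2 * ?Q" using Suc by simp
  have V: "(\<Sum>\<tau>\<in>Vk L k. wt h \<beta> L \<tau>) = 1 + (\<Sum>\<sigma>\<in>Dk L k. wt h \<beta> L \<sigma>)"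
    unfolding Vk_Dk using mo_notin finite_Dk by (simp add: wt_minus_one[OF L0])
  have "(\<Sum>\<sigma>\<in>Dk L (Suc k). wt h \<beta> L \<sigma>) \<le> ?Q * (\<Sum>\<tau>\<in>Vk L k. wt h \<beta> L \<tau>)"
    using T_rec[OF L0 _ Suc.prems KL] by simp
  also have "\<dots> \<le> ?Q * (1 + 2 * ?Q)" unfolding V using IH Q0 by (intro mult_left_mono) auto
  also have "\<dots> \<le> 2 * ?Q"
  proof -
    have "?Q * (2 * ?Q) \<le> ?Q * 1" using Q Q0 by (intro mult_left_mono) auto
    then show ?thesis by (simp add: algebra_simps)
  qed
  finally show ?case .
qed

definition Fset :: "real \<Rightarrow> nat \<Rightarrow> config set" where
  "Fset h L = {flip \<sigma> x s | \<sigma> x s. \<sigma> \<in> Rset h L \<and> x \<in> torus L \<and> s \<in> {1, -1}}"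

lemma card_Fset: "finite (Fset h L) \<and> card (Fset h L) \<le> 4 * card (torus L) ^ 2"
proof -
  let ?n = "n0 h"
  let ?O = "{(?n, ?n+1), (?n+1, ?n)}"
  let ?I = "{..<L} \<times> {..<L} \<times> ?O \<times> torus L \<times> {1::int, -1}"
  let ?f = "\<lambda>(a,b,wv,x,s). flip (rcfg L a b (fst wv) (snd wv)) x s"
  have sub: "Fset h L \<subseteq> ?f ` ?I"
  proof
    fix \<tau> assume "\<tau> \<in> Fset h L"
    then obtain \<sigma> x s where t: "\<tau> = flip \<sigma> x s" "\<sigma> \<in> Rset h L" "x \<in> torus L" "s \<in> {1,-1}"
      unfolding Fset_def by blast
    from Rset_rcfg[OF t(2)] obtain a b w v where r: "a < L" "b < L" "(w = ?n \<and> v = ?n + 1) \<or> (w = ?n + 1 \<and> v = ?n)"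
      "\<sigma> = rcfg L a b w v" by blast
    have "(a,b,(w,v),x,s) \<in> ?I" using r t by auto
    moreover have "\<tau> = ?f (a,b,(w,v),x,s)" using r t by simp
    ultimately show "\<tau> \<in> ?f ` ?I" by blast
  qed
  have fI: "finite ?I" by simp
  have "card (Fset h L) \<le> card (?f ` ?I)" by (rule card_mono[OF _ sub]) (simp)
  also have "\<dots> \<le> card ?I" by (rule card_image_le[OF fI])
  also have "\<dots> = L * (L * (card ?O * (card (torus L) * card {1::int, -1})))"
    by (simp only: card_cartesian_product card_lessThan)
  also have "\<dots> \<le> L * (L * (2 * (card (torus L) * 2)))"
  proof -
    have "card ?O \<le> 2" by (simp add: card_insert_if)
    moreover have "card {1::int, -1} = 2" by simp
    ultimately show ?thesis by (intro mult_left_mono mult_right_mono) auto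
  qed
  also have "\<dots> = 4 * card (torus L) ^ 2" by (simp add: card_torus power2_eq_square)
  finally show ?thesis using finite_subset[OF sub] fI by simp
qed

lemma Ncount_Sset: "Ncount L \<sigma> = card (Sset L \<sigma>)" unfolding Ncount_def Sset_def by simp

lemma valley_sub: "(valley h L - {minus_one L}) \<inter> Omega L \<subseteq> Dk L (n0 h * (n0 h + 1)) \<union> (Fset h L \<inter> Omega L)"
proof
  fix \<sigma> assume s: "\<sigma> \<in> (valley h L - {minus_one L}) \<inter> Omega L"
  then have "(\<sigma> \<in> Omega L \<and> Ncount L \<sigma> \<le> n0 h * (n0 h + 1)) \<or> \<sigma> \<in> Fset h L"
    unfolding valley_def Fset_def by blast
  then show "\<sigma> \<in> Dk L (n0 h * (n0 h + 1)) \<union> (Fset h L \<inter> Omega L)"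
    using s unfolding Dk_def Ncount_Sset by blast
qed

lemma ratio_eq: assumes L0: "0 < L"
  shows "mu h \<beta> L X / mu h \<beta> L {minus_one L} = (\<Sum>\<sigma>\<in>X \<inter> Omega L. wt h \<beta> L \<sigma>)"
proof -
  define c where "c = exp (-\<beta> * (h * real (card (torus L))))"
  have c0: "0 < c" by (simp add: c_def)
  have ex: "exp (-\<beta> * Ham h L \<sigma>) = wt h \<beta> L \<sigma> * c" for \<sigma>
    unfolding Ham_DH[OF L0] wt_def c_def by (simp add: algebra_simps exp_add[symmetric])
  have Z: "0 < Zpart h \<beta> L" unfolding Zpart_def
    using finite_Omega minus_one_Omega by (intro sum_pos2[of _ "minus_one L"]) auto
  have m: "mu h \<beta> L {minus_one L} = c / Zpart h \<beta> L"
    unfolding mu_def using minus_one_Omega ex[of "minus_one L"] by (simp add: wt_minus_one[OF L0])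
  have "mu h \<beta> L X = (\<Sum>\<sigma>\<in>X \<inter> Omega L. wt h \<beta> L \<sigma>) * c / Zpart h \<beta> L"
    unfolding mu_def ex by (simp add: sum_distrib_right)
  then show ?thesis unfolding m using c0 Z by simp
qed

lemma n0_facts: assumes "0 < h" "h < 1" shows "2 \<le> n0 h" "h * real (n0 h) \<le> 2"
proof -
  have g: "2 < 2 / h" using assms by (simp add: field_simps)
  then have f2: "2 \<le> \<lfloor>2/h\<rfloor>" by (simp add: le_floor_iff)
  then show "2 \<le> n0 h" unfolding n0_def by linarith
  have f0: "0 \<le> \<lfloor>2/h\<rfloor>" using f2 by linarith
  have "real (n0 h) = of_int \<lfloor>2/h\<rfloor>" unfolding n0_def by (rule of_nat_nat[OF f0])
  also have "\<dots> \<le> 2 / h" by simp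
  finally show "h * real (n0 h) \<le> 2" using assms by (simp add: field_simps)
qed

lemma main_bound:
  fixes h \<beta> :: real and L :: nat
  assumes h: "0 < h" "h < 1" and L: "n0 h * (n0 h + 1) + 2 \<le> L" and \<beta>: "0 \<le> \<beta>"
    and small: "3 ^ ((2*((n0 h*(n0 h+1))*(n0 h*(n0 h+1)))+1)^2) * (real (card (torus L)) * exp (-2*\<beta>)) \<le> 1/2"
    and small1: "real (card (torus L)) * exp (-2*\<beta>) \<le> 1"
  shows "mu h \<beta> L (valley h L - {minus_one L}) / mu h \<beta> L {minus_one L}
     \<le> (2 * 3 ^ ((2*((n0 h*(n0 h+1))*(n0 h*(n0 h+1)))+1)^2) + 4) * (real (card (torus L)) * exp (-2*\<beta>))"
proof -
  define n where "n = n0 h"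
  define K where "K = n*(n+1)"
  define M where "M = (2*(K*K)+1)^2"
  define B where "B = real (card (torus L)) * exp (-2*\<beta>)"
  have n2: "2 \<le> n" and hn: "h * real n \<le> 2" using n0_facts[OF h] by (simp_all add: n_def)
  have L': "K + 2 \<le> L" using L by (simp add: K_def n_def)
  have L0: "0 < L" and KL: "K < L" using L' by auto
  have B0: "0 \<le> B" by (simp add: B_def)
  have sm: "3 ^ M * B \<le> 1/2" "B \<le> 1" using small small1 by (simp_all add: M_def K_def n_def B_def)
  let ?Q = "\<Sum>\<tau>\<in>Clu L K. wt h \<beta> L \<tau>"
  have Qb: "?Q \<le> 3 ^ M * B"
    using Q_bound[of h n L \<beta>] h hn L' \<beta> n2 by (simp add: K_def M_def B_def algebra_simps)
  have T: "(\<Sum>\<sigma>\<in>Dk L K. wt h \<beta> L \<sigma>) \<le> 2 * ?Q"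
    using T_all[OF L0 KL, of h \<beta> K] Qb sm by simp
  have Fw: "wt h \<beta> L \<tau> \<le> exp (-2*\<beta>) * exp (-2*\<beta>)" if tF: "\<tau> \<in> Fset h L \<inter> Omega L" for \<tau>
  proof -
    obtain \<sigma> x s where t: "\<tau> = flip \<sigma> x s" "\<sigma> \<in> Rset h L" "x \<in> torus L" "s \<in> {1,-1}"
      using tF unfolding Fset_def by blast
    from Rset_rcfg[OF t(2)] obtain a b w v where r: "(w = n \<and> v = n + 1) \<or> (w = n + 1 \<and> v = n)"
      "\<sigma> = rcfg L a b w v" unfolding n_def by blast
    have "4 \<le> DH h L \<tau>" unfolding t(1) r(2)
      by (rule flip_energy[OF _ n2 _ _ hn r(1) t(3,4)]) (use L' h in \<open>auto simp: K_def\<close>)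
    then have "-\<beta> * DH h L \<tau> \<le> -4*\<beta>" using \<beta> mult_left_mono[of 4 "DH h L \<tau>" \<beta>] by (simp add: mult.commute)
    then show ?thesis unfolding wt_def by (simp add: exp_add[symmetric])
  qed
  have cF: "finite (Fset h L \<inter> Omega L)" "card (Fset h L \<inter> Omega L) \<le> 4 * card (torus L) ^ 2"
    using card_Fset[of h L] card_mono[of "Fset h L" "Fset h L \<inter> Omega L"] by auto
  have F: "(\<Sum>\<tau>\<in>Fset h L \<inter> Omega L. wt h \<beta> L \<tau>) \<le> 4 * B"
  proof -
    have "(\<Sum>\<tau>\<in>Fset h L \<inter> Omega L. wt h \<beta> L \<tau>) \<le> real (card (Fset h L \<inter> Omega L)) * (exp (-2*\<beta>) * exp (-2*\<beta>))"
      using sum_mono[of "Fset h L \<inter> Omega L" "wt h \<beta> L" "\<lambda>_. exp (-2*\<beta>) * exp (-2*\<beta>)"] Fw by simp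
    also have "\<dots> \<le> real (4 * card (torus L) ^ 2) * (exp (-2*\<beta>) * exp (-2*\<beta>))"
      using cF(2) by (intro mult_right_mono) (simp only: of_nat_le_iff, simp)
    also have "\<dots> = 4 * (B * B)" by (simp add: B_def power2_eq_square algebra_simps)
    also have "\<dots> \<le> 4 * (B * 1)" using sm B0 by (intro mult_left_mono) auto
    finally show ?thesis by simp
  qed
  have "mu h \<beta> L (valley h L - {minus_one L}) / mu h \<beta> L {minus_one L}
      = (\<Sum>\<sigma>\<in>(valley h L - {minus_one L}) \<inter> Omega L. wt h \<beta> L \<sigma>)" by (rule ratio_eq[OF L0])
  also have "\<dots> \<le> (\<Sum>\<sigma>\<in>Dk L K \<union> (Fset h L \<inter> Omega L). wt h \<beta> L \<sigma>)"
    using valley_sub[of h L] finite_Dk cF wt_pos unfolding K_def n_def by (intro sum_mono2) (auto intro: less_imp_le)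
  also have "\<dots> \<le> (\<Sum>\<sigma>\<in>Dk L K. wt h \<beta> L \<sigma>) + (\<Sum>\<sigma>\<in>Fset h L \<inter> Omega L. wt h \<beta> L \<sigma>)"
  proof -
    have "0 \<le> (\<Sum>\<sigma>\<in>Dk L K \<inter> (Fset h L \<inter> Omega L). wt h \<beta> L \<sigma>)" using wt_pos by (simp add: sum_nonneg less_imp_le)
    then show ?thesis using sum_Un[OF finite_Dk[of L K] cF(1), of "wt h \<beta> L"] by linarith
  qed
  also have "\<dots> \<le> 2 * (3^M * B) + 4 * B" using T Qb F by linarith
  also have "\<dots> = (2 * 3^M + 4) * B" by (simp add: algebra_simps)
  finally show ?thesis by (simp add: M_def K_def n_def B_def)
qed

theorem lemma8p2:
  fixes h :: real and L :: "real \<Rightarrow> nat"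
  assumes "0 < h" and "h < 1" and "2 / h \<notin> \<int>"
    and "\<And>\<beta>. \<beta> > 0 \<Longrightarrow> L \<beta> \<ge> n0 h * (n0 h + 1) + 2"
    and "((\<lambda>\<beta>. real (card (torus (L \<beta>))) * exp (-2 * \<beta>)) \<longlongrightarrow> 0) at_top"
  shows "\<exists>C0::real. (\<forall>\<beta>\<ge>C0.
            mu h \<beta> (L \<beta>) (valley h (L \<beta>) - {minus_one (L \<beta>)}) / mu h \<beta> (L \<beta>) {minus_one (L \<beta>)}
              \<le> C0 * real (card (torus (L \<beta>))) * exp (-2 * \<beta>)) \<and>
         ((\<lambda>\<beta>. mu h \<beta> (L \<beta>) (valley h (L \<beta>) - {minus_one (L \<beta>)}) / mu h \<beta> (L \<beta>) {minus_one (L \<beta>)})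
           \<longlongrightarrow> 0) at_top"
proof -
  define M :: nat where "M = (2*((n0 h*(n0 h+1))*(n0 h*(n0 h+1)))+1)^2"
  define B where "B = (\<lambda>\<beta>. real (card (torus (L \<beta>))) * exp (-2 * \<beta>))"
  define R where "R = (\<lambda>\<beta>. mu h \<beta> (L \<beta>) (valley h (L \<beta>) - {minus_one (L \<beta>)}) / mu h \<beta> (L \<beta>) {minus_one (L \<beta>)})"
  define \<epsilon> :: real where "\<epsilon> = min 1 (1 / (2 * 3^M))"
  have \<epsilon>0: "0 < \<epsilon>" by (simp add: \<epsilon>_def)
  have "eventually (\<lambda>\<beta>. B \<beta> < \<epsilon>) at_top"
    using order_tendstoD(2)[OF assms(5) \<epsilon>0] unfolding B_def .
  then obtain \<beta>0 where \<beta>0: "\<And>\<beta>. \<beta> \<ge> \<beta>0 \<Longrightarrow> B \<beta> < \<epsilon>" by (auto simp: eventually_at_top_linorder)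
  define C0 where "C0 = max (max \<beta>0 1) (2 * 3^M + 4)"
  have bound: "R \<beta> \<le> C0 * B \<beta>" "0 \<le> R \<beta>" if b: "\<beta> \<ge> C0" for \<beta>
  proof -
    have b1: "\<beta> \<ge> 1" "\<beta> \<ge> \<beta>0" using b unfolding C0_def by auto
    have Lb: "n0 h * (n0 h + 1) + 2 \<le> L \<beta>" using assms(4) b1 by simp
    have Bs: "B \<beta> < \<epsilon>" using \<beta>0 b1 by simp
    have B0: "0 \<le> B \<beta>" by (simp add: B_def)
    have s1: "B \<beta> \<le> 1" using Bs by (simp add: \<epsilon>_def)
    have "B \<beta> \<le> 1 / (2 * 3^M)" using Bs by (simp add: \<epsilon>_def)
    then have s2: "3^M * B \<beta> \<le> 1/2" by (simp add: field_simps)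
    have "R \<beta> \<le> (2 * 3^M + 4) * B \<beta>"
      using main_bound[OF assms(1,2) Lb, of \<beta>] b1 s1 s2 unfolding R_def B_def M_def by simp
    also have "\<dots> \<le> C0 * B \<beta>" using B0 by (intro mult_right_mono) (auto simp: C0_def)
    finally show "R \<beta> \<le> C0 * B \<beta>" .
    have "0 < L \<beta>" using Lb by simp
    then show "0 \<le> R \<beta>" unfolding R_def using ratio_eq wt_pos by (simp add: sum_nonneg less_imp_le)
  qed
  have lim: "((\<lambda>\<beta>. C0 * B \<beta>) \<longlongrightarrow> 0) at_top"
    using tendsto_mult[OF tendsto_const[of C0] assms(5)] unfolding B_def by simp
  have "(R \<longlongrightarrow> 0) at_top"
  proof (rule tendsto_sandwich[OF _ _ tendsto_const lim])
    show "eventually (\<lambda>\<beta>. 0 \<le> R \<beta>) at_top" using bound(2) by (auto simp: eventually_at_top_linorder)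
    show "eventually (\<lambda>\<beta>. R \<beta> \<le> C0 * B \<beta>) at_top" using bound(1) by (auto simp: eventually_at_top_linorder)
  qed
  moreover have "\<forall>\<beta>\<ge>C0. R \<beta> \<le> C0 * real (card (torus (L \<beta>))) * exp (-2 * \<beta>)"
    using bound(1) unfolding B_def by (simp add: mult.assoc)
  ultimately show ?thesis unfolding R_def by blast
qed

end
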